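(* Let $d\geq 1$ be an integer, $P$ a positive integer, $I=\{1,\ldots,P\}$, and $$F_1(\alpha)=\sum_{x_1,\ldots,x_d\in I}e(\alpha f_d(x_1,\ldots,x_d)).$$ Then for every $\varepsilon>0$, $$\int_0^1|F_1(\alpha)|^2\,d\alpha\ll P^{d+\varepsilon}.$$
   Context: For an integer $d\geq 1$ define $f_d$ as follows: if $d=2k$ is even ($k\geq 1$), $f_d(x_1,\ldots,x_d)=\prod_{i=1}^{k}(x_{2i-1}^2+x_{2i}^2)$; if $d=2k+1$ is odd ($k\geq 0$), $f_d(x_1,\ldots,x_d)=x_1\prod_{i=1}^{k}(x_{2i}^2+x_{2i+1}^2)$ (empty product $=1$). Here $e(\alpha)=e^{2\pi i\alpha}$ and the implied constant in $\ll$ depends at most on $\varepsilon$ and $d$. *)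

theory Defs
  imports "HOL-Analysis.Analysis"
begin

definition e :: "real \<Rightarrow> complex" where
  "e \<alpha> = exp (2 * of_real pi * \<i> * of_real \<alpha>)"

text \<open>The form f_d; a point (x_1,...,x_d) is a function x :: nat => int, using indices 1..d.\<close>
definition f :: "nat \<Rightarrow> (nat \<Rightarrow> int) \<Rightarrow> int" where
  "f d x = (if even d
     then (\<Prod>i=1..d div 2. (x (2*i-1))^2 + (x (2*i))^2)
     else x 1 * (\<Prod>i=1..d div 2. (x (2*i))^2 + (x (2*i+1))^2))"

definition F1 :: "nat \<Rightarrow> nat \<Rightarrow> real \<Rightarrow> complex" where
  "F1 d P \<alpha> = (\<Sum>x\<in>PiE {1..d} (\<lambda>_. {1..int P}). e (\<alpha> * of_int (f d x)))"

end

theory Submission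
  imports Defs "HOL-Number_Theory.Number_Theory"
begin


lemma divisors_prime_power_split:
  fixes p m :: nat and a :: nat
  assumes p: "prime p" and m: "m > 0" and pm: "\<not> p dvd m"
  shows "{c. c dvd p^a * m} \<subseteq> (\<lambda>(i,c). p^i * c) ` ({..a} \<times> {c. c dvd m})"
proof
  fix c assume "c \<in> {c. c dvd p^a * m}"
  hence cd: "c dvd p^a * m" by simp
  have c0: "c \<noteq> 0" using cd m p by (metis dvd_0_left_iff mult_is_0 not_prime_0 power_eq_0_iff neq0_conv)
  have nu: "\<not> is_unit p" using p by (simp add: prime_nat_iff)
  obtain c' where c': "c = p ^ multiplicity p c * c'" "\<not> p dvd c'"
    using multiplicity_decompose'[OF c0 nu] by blast
  define i where "i = multiplicity p c"
  have cop: "coprime c' (p^a)" using c'(2) p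
    by (metis coprime_commute coprime_power_right_iff prime_imp_coprime_nat)
  have "c' dvd p^a * m" using cd c' by (metis dvd_mult_right)
  hence c'm: "c' dvd m" using cop by (simp add: coprime_dvd_mult_right_iff)
  have pid: "p^i dvd p^a * m" using cd c' i_def by (metis dvd_mult_left)
  have ia: "i \<le> a"
  proof (rule ccontr)
    assume "\<not> i \<le> a"
    hence "p^(Suc a) dvd p^i" by (intro le_imp_power_dvd) simp
    with pid have "p^a * p dvd p^a * m" by (metis dvd_trans power_Suc2)
    hence "p dvd m" using p by (metis dvd_mult_cancel_left nat_mult_dvd_cancel_disj power_eq_0_iff not_prime_0)
    with pm show False by simp
  qed
  show "c \<in> (\<lambda>(i,c). p^i * c) ` ({..a} \<times> {c. c dvd m})"
    using ia c'm c' i_def by (auto intro!: image_eqI[of _ _ "(i,c')"])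
qed

lemma card_divisors_split:
  fixes p m :: nat and a :: nat
  assumes p: "prime p" and m: "m > 0" and pm: "\<not> p dvd m"
  shows "card {c. c dvd p^a * m} \<le> (a+1) * card {c. c dvd m}"
proof -
  have fin: "finite {c. c dvd m}" using m by simp
  have "card {c. c dvd p^a * m} \<le> card ((\<lambda>(i,c). p^i * c) ` ({..a} \<times> {c. c dvd m}))"
    by (rule card_mono[OF finite_imageI divisors_prime_power_split[OF assms]]) (use fin in simp)
  also have "\<dots> \<le> card ({..a} \<times> {c. c dvd m})" by (rule card_image_le) (use fin in simp)
  also have "\<dots> = (a+1) * card {c. c dvd m}" by (simp add: card_cartesian_product)
  finally show ?thesis .
qed

lemma small_bound:
  fixes \<delta> :: real assumes "\<delta> > 0"
  shows "real (a+1) \<le> max 1 (1/(\<delta>*ln 2)) * 2 powr (\<delta> * real a)"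
proof -
  define c where "c = \<delta> * ln 2"
  have c0: "c > 0" using assms by (simp add: c_def)
  have e: "2 powr (\<delta> * real a) = exp (c * real a)" by (simp add: powr_def c_def algebra_simps)
  have ex: "1 + c * real a \<le> exp (c * real a)" by (rule exp_ge_add_one_self_aux) (use c0 in simp)
  show ?thesis
  proof (cases "c \<ge> 1")
    case True
    have "real a \<le> c * real a" using True mult_right_mono[of 1 c "real a"] by simp
    hence "real (a+1) \<le> 1 + c * real a" by simp
    also have "\<dots> \<le> max 1 (1/c) * exp (c * real a)"
      by (smt (verit) ex exp_gt_zero mult_le_cancel_right1 max.cobounded1 mult_right_mono)
    finally show ?thesis by (simp add: e c_def)
  next
    case False
    have "real (a+1) \<le> (1/c) * (1 + c * real a)" using False c0
      by (simp add: field_simps)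
    also have "\<dots> \<le> max 1 (1/c) * exp (c * real a)"
      using ex c0 by (intro mult_mono) auto
    finally show ?thesis by (simp add: e c_def)
  qed
qed

lemma divisor_bound_aux:
  fixes \<delta> K B :: real
  assumes d: "\<delta> > 0" and B: "B \<ge> 1"
    and small: "\<And>a::nat. real (a+1) \<le> B * 2 powr (\<delta> * real a)"
    and large: "\<And>p a::nat. real p > K \<Longrightarrow> real (a+1) \<le> real p powr (\<delta> * real a)"
  shows "n > 0 \<Longrightarrow> real (card {c. c dvd n}) \<le> B ^ card {p. prime p \<and> p dvd n \<and> real p \<le> K} * real n powr \<delta>"
proof (induction n rule: less_induct)
  case (less n)
  define PS where "PS = (\<lambda>n::nat. {p. prime p \<and> p dvd n \<and> real p \<le> K})"
  show ?case
  proof (cases "n = 1")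
    case True
    have "1 \<le> B ^ card (PS 1)" using B by simp
    thus ?thesis using True by (simp add: PS_def)
  next
    case False
    with less.prems have n1: "n > 1" by simp
    obtain p where p: "prime p" "p dvd n" using prime_factor_nat[of n] n1 by auto
    have nu: "\<not> is_unit p" using p by (simp add: prime_nat_iff)
    have n0: "n \<noteq> 0" using n1 by simp
    define a where "a = multiplicity p n"
    define m where "m = n div p^a"
    have nm: "n = p^a * m" using multiplicity_dvd[of p n] unfolding m_def a_def by simp
    have pm: "\<not> p dvd m" unfolding m_def a_def by (rule multiplicity_decompose[OF n0 nu])
    have a1: "a > 0" unfolding a_def using multiplicity_gt_zero_iff[OF n0 nu] p by simp
    have p2: "p \<ge> 2" using p by (simp add: prime_ge_2_nat)
    have m0: "m > 0" using nm n0 by (cases "m = 0") auto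
    have "p \<le> p^a" using power_increasing[of 1 a p] a1 p2 by simp
    hence pa: "1 < p^a" using p2 by simp
    have "1 * m < p^a * m" using pa m0 by (intro mult_strict_right_mono) auto
    hence mn: "m < n" using nm by simp
    have IH: "real (card {c. c dvd m}) \<le> B ^ card (PS m) * real m powr \<delta>"
      using less.IH[OF mn m0] by (simp add: PS_def)
    have split: "card {c. c dvd n} \<le> (a+1) * card {c. c dvd m}"
      using card_divisors_split[OF p(1) m0 pm, of a] nm by simp
    have pw: "real n powr \<delta> = real p powr (\<delta> * real a) * real m powr \<delta>"
    proof -
      have "real n = real p powr (real a) * real m" using nm p2 by (simp add: powr_realpow)
      hence "real n powr \<delta> = (real p powr (real a)) powr \<delta> * real m powr \<delta>"
        by (simp add: powr_mult)
      also have "\<dots> = real p powr (\<delta> * real a) * real m powr \<delta>" by (simp add: powr_powr mult.commute)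
      finally show ?thesis .
    qed
    have PSsub: "PS n \<subseteq> insert p (PS m)"
    proof
      fix q assume q: "q \<in> PS n"
      show "q \<in> insert p (PS m)"
      proof (cases "q = p")
        case False
        have "prime q" "q dvd p^a * m" using q nm by (auto simp: PS_def)
        hence "q dvd p^a \<or> q dvd m" using prime_dvd_mult_iff by blast
        moreover have "\<not> q dvd p^a"
          using False \<open>prime q\<close> p(1) by (metis prime_dvd_power primes_dvd_imp_eq)
        ultimately have "q dvd m" by simp
        thus ?thesis using q by (auto simp: PS_def)
      qed simp
    qed
    have PSsub2: "PS m \<subseteq> PS n" using nm by (auto simp: PS_def)
    have finm: "finite (PS m)" by (rule finite_subset[of _ "{c. c dvd m}"]) (use m0 in \<open>auto simp: PS_def\<close>)
    have finn: "finite (PS n)" by (rule finite_subset[of _ "{c. c dvd n}"]) (use n0 in \<open>auto simp: PS_def\<close>)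
    have pnot: "p \<notin> PS m" using pm by (simp add: PS_def)
    have B0: "B \<ge> 0" using B by simp
    show ?thesis
    proof (cases "real p \<le> K")
      case True
      have "PS n = insert p (PS m)" using PSsub PSsub2 True p by (auto simp: PS_def)
      hence cardeq: "card (PS n) = card (PS m) + 1" using finm pnot by simp
      have "real (a+1) \<le> B * 2 powr (\<delta> * real a)" by (rule small)
      also have "\<dots> \<le> B * real p powr (\<delta> * real a)"
        using p2 d B0 by (intro mult_left_mono powr_mono2) auto
      finally have ab: "real (a+1) \<le> B * real p powr (\<delta> * real a)" .
      have "real (card {c. c dvd n}) \<le> real (a+1) * real (card {c. c dvd m})"
        using split by (metis of_nat_le_iff of_nat_mult)
      also have "\<dots> \<le> (B * real p powr (\<delta> * real a)) * (B ^ card (PS m) * real m powr \<delta>)"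
        using ab IH by (intro mult_mono) auto
      also have "\<dots> = B ^ card (PS n) * real n powr \<delta>" using cardeq pw by (simp add: algebra_simps)
      finally show ?thesis by (simp add: PS_def)
    next
      case False
      have "PS n = PS m" using PSsub PSsub2 False by (auto simp: PS_def)
      have ab: "real (a+1) \<le> real p powr (\<delta> * real a)" using False large by simp
      have "real (card {c. c dvd n}) \<le> real (a+1) * real (card {c. c dvd m})"
        using split by (metis of_nat_le_iff of_nat_mult)
      also have "\<dots> \<le> (real p powr (\<delta> * real a)) * (B ^ card (PS m) * real m powr \<delta>)"
        using ab IH by (intro mult_mono) auto
      also have "\<dots> = B ^ card (PS n) * real n powr \<delta>" using \<open>PS n = PS m\<close> pw by (simp add: algebra_simps)
      finally show ?thesis by (simp add: PS_def)
    qed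
  qed
qed

lemma divisor_bound:
  fixes \<delta> :: real assumes d: "\<delta> > 0"
  shows "\<exists>C\<ge>1. \<forall>n::nat. n > 0 \<longrightarrow> real (card {c. c dvd n}) \<le> C * real n powr \<delta>"
proof -
  define B where "B = max 1 (1/(\<delta>*ln 2))"
  define K where "K = (2::real) powr (1/\<delta>)"
  have B: "B \<ge> 1" by (simp add: B_def)
  have small: "\<And>a::nat. real (a+1) \<le> B * 2 powr (\<delta> * real a)" unfolding B_def by (rule small_bound[OF d])
  have large: "real (a+1) \<le> real p powr (\<delta> * real a)" if "real p > K" for p a :: nat
  proof -
    have K0: "K > 0" by (simp add: K_def)
    have "K powr \<delta> = 2" using d by (simp add: K_def powr_powr)
    moreover have "K powr \<delta> \<le> real p powr \<delta>" using that K0 d by (intro powr_mono2) auto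
    ultimately have p2: "2 \<le> real p powr \<delta>" by simp
    have pp: "real p > 0" using that K0 by simp
    have "real (a+1) \<le> 2 ^ a" by (induction a) auto
    also have "\<dots> \<le> (real p powr \<delta>) ^ a" using p2 by (intro power_mono) auto
    also have "\<dots> = real p powr (\<delta> * real a)" using pp by (simp add: powr_realpow[symmetric] powr_powr)
    finally show ?thesis .
  qed
  define C where "C = B ^ (nat \<lfloor>K\<rfloor> + 1)"
  have C1: "C \<ge> 1" unfolding C_def by (rule one_le_power[OF B])
  have "real (card {c. c dvd n}) \<le> C * real n powr \<delta>" if n: "n > 0" for n :: nat
  proof -
    let ?PS = "{p. prime p \<and> p dvd n \<and> real p \<le> K}"
    have "?PS \<subseteq> {..nat \<lfloor>K\<rfloor>}" by (auto simp: le_nat_floor)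
    hence "card ?PS \<le> card {..nat \<lfloor>K\<rfloor>}" by (intro card_mono) auto
    hence cp: "card ?PS \<le> nat \<lfloor>K\<rfloor> + 1" by simp
    have "real (card {c. c dvd n}) \<le> B ^ card ?PS * real n powr \<delta>"
      by (rule divisor_bound_aux[OF d B small large n]) auto
    also have "\<dots> \<le> C * real n powr \<delta>" unfolding C_def using B cp
      by (intro mult_right_mono power_increasing) auto
    finally show ?thesis .
  qed
  thus ?thesis using C1 by blast
qed



definition DI :: "int \<Rightarrow> int set" where "DI z = {c. 0 < c \<and> c dvd z}"
definition RT :: "int \<Rightarrow> int set" where "RT z = {t. 0 \<le> t \<and> t < z \<and> z dvd t^2 + 1}"

lemma finite_DI: "z \<noteq> 0 \<Longrightarrow> finite (DI z)"
  unfolding DI_def by (rule finite_subset[of _ "{-\<bar>z\<bar>..\<bar>z\<bar>}"]) (auto dest: dvd_imp_le_int)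

lemma DI_mono: "z \<noteq> 0 \<Longrightarrow> w dvd z \<Longrightarrow> card (DI w) \<le> card (DI z)"
  by (rule card_mono[OF finite_DI]) (auto simp: DI_def intro: dvd_trans)

lemma coprime_root: fixes t z :: int assumes "z dvd t^2 + 1" shows "coprime t z"
proof -
  have "gcd t (t * t + 1) = gcd t 1" by (rule gcd_add_mult)
  hence "coprime t (t^2 + 1)" by (simp add: power2_eq_square coprime_iff_gcd_eq_1)
  thus ?thesis using assms coprime_divisors[of t t z "t^2+1"] by simp
qed

lemma card_RT: fixes z :: int assumes z: "z > 0" shows "card (RT z) \<le> 2 * card (DI z)"
proof (cases "RT z = {}")
  case True thus ?thesis by simp
next
  case False
  then obtain t0 where t0: "t0 \<in> RT z" by blast
  have ct0: "coprime t0 z" using t0 coprime_root by (auto simp: RT_def)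
  define g where "g s = gcd (s - t0) z" for s
  define q where "q s = z div g s" for s
  define h where "h s = gcd (g s) (q s)" for s
  define L where "L s = z div h s" for s
  define \<phi> where "\<phi> s = (g s, s div L s)" for s
  have facts: "g s > 0 \<and> g s dvd z \<and> z = g s * q s \<and> g s dvd s - t0 \<and> q s dvd s + t0
     \<and> h s \<in> {1,2} \<and> z = h s * L s \<and> L s > 0 \<and> lcm (g s) (q s) = L s" if s: "s \<in> RT z" for s
  proof -
    have gp: "g s > 0" using z by (simp add: g_def)
    have gz: "g s dvd z" by (simp add: g_def)
    have zq: "z = g s * q s" using gz by (simp add: q_def)
    have gs: "g s dvd s - t0" by (simp add: g_def)
    have A1: "z dvd s^2 + 1" and A2: "z dvd t0^2 + 1" using s t0 by (auto simp: RT_def)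
    have "z dvd (s^2 + 1) - (t0^2 + 1)" using A1 A2 by (rule dvd_diff)
    moreover have "(s^2 + 1) - (t0^2 + 1) = (s - t0) * (s + t0)" by (simp add: algebra_simps power2_eq_square)
    ultimately have zd: "z dvd (s - t0) * (s + t0)" by simp
    define u where "u = (s - t0) div g s"
    have su: "s - t0 = g s * u" using gs by (simp add: u_def)
    have cu: "coprime u (q s)" unfolding u_def q_def g_def by (rule div_gcd_coprime) (use z in simp)
    have "g s * q s dvd g s * (u * (s + t0))" using zd zq su by (simp add: mult.assoc)
    hence "q s dvd u * (s + t0)" using gp by simp
    hence qs: "q s dvd s + t0" using cu coprime_dvd_mult_right_iff[of "q s" u "s + t0"] by (simp add: coprime_commute)
    have hg: "h s dvd g s" "h s dvd q s" by (simp_all add: h_def)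
    have "h s dvd (s + t0) - (s - t0)" using hg gs qs by (meson dvd_diff dvd_trans)
    hence h2t: "h s dvd 2 * t0" by (simp add: algebra_simps)
    have hz: "h s dvd z" using hg gz by (meson dvd_trans)
    have "coprime (h s) t0" using ct0 hz by (meson coprime_commute coprime_divisors dvd_refl)
    hence "h s dvd 2" using h2t by (simp add: coprime_dvd_mult_left_iff)
    moreover have hp: "h s > 0" using gp by (simp add: h_def)
    ultimately have "h s \<le> 2" by (simp add: zdvd_imp_le)
    hence h12: "h s \<in> {1,2}" using hp by auto
    have zL: "z = h s * L s" using hz by (simp add: L_def)
    have Lp: "L s > 0" using zL z hp by (metis zero_less_mult_pos)
    have "\<bar>g s\<bar> * \<bar>q s\<bar> = h s * lcm (g s) (q s)" unfolding h_def by (rule prod_gcd_lcm_int)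
    hence "h s * L s = h s * lcm (g s) (q s)" using zq zL gp z
      by (metis abs_of_pos zero_less_mult_pos)
    hence "lcm (g s) (q s) = L s" using hp by simp
    thus ?thesis using gp gz zq gs qs h12 zL Lp by blast
  qed
  have inj: "inj_on \<phi> (RT z)"
  proof (rule inj_onI)
    fix s s' assume s: "s \<in> RT z" and s': "s' \<in> RT z" and e: "\<phi> s = \<phi> s'"
    have ge: "g s = g s'" and de: "s div L s = s' div L s'" using e by (simp_all add: \<phi>_def)
    have qe: "q s = q s'" using ge by (simp add: q_def)
    have Le: "L s = L s'" using ge qe by (simp add: L_def h_def)
    have X1: "g s dvd s - t0" using facts[OF s] by blast
    have X2: "g s dvd s' - t0" using facts[OF s'] ge by simp
    have X3: "q s dvd s + t0" using facts[OF s] by blast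
    have X4: "q s dvd s' + t0" using facts[OF s'] qe by simp
    have "g s dvd (s - t0) - (s' - t0)" using X1 X2 by (rule dvd_diff)
    hence d1: "g s dvd s - s'" by simp
    have "q s dvd (s + t0) - (s' + t0)" using X3 X4 by (rule dvd_diff)
    hence d2: "q s dvd s - s'" by simp
    have "lcm (g s) (q s) dvd s - s'" using d1 d2 by (rule lcm_least)
    hence "L s dvd s - s'" using facts[OF s] by simp
    hence "s mod L s = s' mod L s" by (simp add: mod_eq_dvd_iff)
    moreover have "s = L s * (s div L s) + s mod L s" by simp
    moreover have "s' = L s * (s' div L s) + s' mod L s" by simp
    ultimately show "s = s'" using de Le by metis
  qed
  have img: "\<phi> ` RT z \<subseteq> DI z \<times> {0,1}"
  proof
    fix y assume "y \<in> \<phi> ` RT z"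
    then obtain s where s: "s \<in> RT z" and y: "y = \<phi> s" by blast
    have F: "g s > 0" "g s dvd z" "h s \<in> {1,2}" "z = h s * L s" "L s > 0" using facts[OF s] by blast+
    have s0: "0 \<le> s" "s < z" using s by (auto simp: RT_def)
    have "s < 2 * L s" using F s0 by auto
    have "L s * (s div L s) = s - s mod L s" by (simp add: minus_mod_eq_mult_div)
    moreover have "s mod L s \<ge> 0" using F by simp
    ultimately have "L s * (s div L s) < L s * 2" using \<open>s < 2 * L s\<close> by linarith
    hence "s div L s < 2" using F by simp
    moreover have "s div L s \<ge> 0" using F(5) s0(1) pos_imp_zdiv_nonneg_iff by blast
    ultimately have "s div L s \<in> {0,1}" by auto
    thus "y \<in> DI z \<times> {0,1}" using F y by (auto simp: \<phi>_def DI_def)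
  qed
  have "card (RT z) = card (\<phi> ` RT z)" using inj by (simp add: card_image)
  also have "\<dots> \<le> card (DI z \<times> {0::int,1})"
    by (rule card_mono[OF _ img]) (use finite_DI z in simp)
  also have "\<dots> = 2 * card (DI z)" by (simp add: card_cartesian_product)
  finally show ?thesis .
qed



definition PR :: "int \<Rightarrow> (int \<times> int) set" where
  "PR z = {(a,b). 0 < a \<and> 0 < b \<and> coprime a b \<and> a^2 + b^2 = z}"
definition SQ :: "int \<Rightarrow> (int \<times> int) set" where
  "SQ z = {(a,b). 0 < a \<and> 0 < b \<and> a^2 + b^2 = z}"
definition TT :: "int \<Rightarrow> (int \<times> int) set" where
  "TT z = {(a,b). 0 < a \<and> 0 < b \<and> (a^2 + b^2) dvd z}"

lemma finite_RT: "finite (RT z)"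
  unfolding RT_def by (rule finite_subset[of _ "{0..z}"]) auto

lemma le_sq: fixes a :: int shows "0 < a \<Longrightarrow> a \<le> a^2"
  by (simp add: power2_eq_square)

lemma finite_SQ: "finite (SQ z)"
proof (rule finite_subset[of _ "{0..z} \<times> {0..z}"])
  show "SQ z \<subseteq> {0..z} \<times> {0..z}"
  proof
    fix x assume "x \<in> SQ z"
    then obtain a b where x: "x = (a,b)" "0 < a" "0 < b" "a^2 + b^2 = z" by (auto simp: SQ_def)
    have "a \<le> a^2" "b \<le> b^2" using le_sq[of a] le_sq[of b] x by auto
    moreover have "0 \<le> a^2" "0 \<le> b^2" by simp_all
    ultimately have "a \<le> z" "b \<le> z" using x by linarith+
    thus "x \<in> {0..z} \<times> {0..z}" using x by auto
  qed
qed simp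

lemma card_PR: fixes z :: int shows "card (PR z) \<le> card (RT z)"
proof -
  define \<psi> where "\<psi> p = (SOME t. 0 \<le> t \<and> t < z \<and> z dvd t * snd p - fst p)" for p :: "int \<times> int"
  have key: "0 \<le> \<psi> (a,b) \<and> \<psi> (a,b) < z \<and> z dvd \<psi> (a,b) * b - a \<and> coprime b z" if ab: "(a,b) \<in> PR z" for a b
  proof -
    have a: "0 < a" and b: "0 < b" and cab: "coprime a b" and zab: "a^2 + b^2 = z"
      using ab by (auto simp: PR_def)
    have zp: "z > 0" using a b zab by (smt (verit) zero_less_power2)
    have "gcd b (b * b + a^2) = gcd b (a^2)" by (rule gcd_add_mult)
    moreover have "coprime b (a^2)" using cab by (simp add: coprime_commute)
    ultimately have cbz: "coprime b z" using zab by (simp add: coprime_iff_gcd_eq_1 power2_eq_square add.commute)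
    obtain b' where b': "[b * b' = 1] (mod z)" using cong_solve_coprime_int[OF cbz] by blast
    have "z dvd b * b' - 1" using b' by (simp add: cong_iff_dvd_diff)
    define t where "t = (a * b') mod z"
    have t: "0 \<le> t" "t < z" using zp by (simp_all add: t_def)
    have "z dvd t - a * b'" unfolding t_def by (simp add: mod_eq_dvd_iff[symmetric])
    hence "z dvd (t - a * b') * b + a * (b * b' - 1)" using \<open>z dvd b * b' - 1\<close> by simp
    hence "z dvd t * b - a" by (simp add: algebra_simps)
    hence ex: "\<exists>t. 0 \<le> t \<and> t < z \<and> z dvd t * snd (a,b) - fst (a,b)" using t by auto
    have "0 \<le> \<psi> (a,b) \<and> \<psi> (a,b) < z \<and> z dvd \<psi> (a,b) * snd (a,b) - fst (a,b)"
      unfolding \<psi>_def by (rule someI_ex[OF ex])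
    thus ?thesis using cbz by simp
  qed
  have img: "\<psi> ` PR z \<subseteq> RT z"
  proof
    fix y assume "y \<in> \<psi> ` PR z"
    then obtain a b where ab: "(a,b) \<in> PR z" and y: "y = \<psi> (a,b)" by auto
    have zab: "a^2 + b^2 = z" using ab by (auto simp: PR_def)
    note K = key[OF ab]
    define t where "t = \<psi> (a,b)"
    have "z dvd (t * b - a) * (t * b + a)" using K by (simp add: t_def)
    hence "z dvd (t * b - a) * (t * b + a) + (a^2 + b^2)" using zab by simp
    hence "z dvd b^2 * (t^2 + 1)" by (simp add: algebra_simps power2_eq_square)
    moreover have "coprime z (b^2)" using K by (simp add: coprime_commute)
    ultimately have "z dvd t^2 + 1" by (simp add: coprime_dvd_mult_right_iff)
    thus "y \<in> RT z" using K y by (simp add: RT_def t_def)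
  qed
  have inj: "inj_on \<psi> (PR z)"
  proof (rule inj_onI)
    fix p p' assume p: "p \<in> PR z" and p': "p' \<in> PR z" and e: "\<psi> p = \<psi> p'"
    obtain a b where ab: "p = (a,b)" by (cases p)
    obtain c d where cd: "p' = (c,d)" by (cases p')
    have A: "0 < a" "0 < b" "coprime a b" "a^2 + b^2 = z" using p ab by (auto simp: PR_def)
    have C: "0 < c" "0 < d" "coprime c d" "c^2 + d^2 = z" using p' cd by (auto simp: PR_def)
    define t where "t = \<psi> (a,b)"
    have d1: "z dvd t * b - a" using key[of a b] p ab by (simp add: t_def)
    have d2: "z dvd t * d - c" using key[of c d] p' cd e ab by (simp add: t_def)
    have "z dvd (t * d - c) * b - (t * b - a) * d" using d1 d2 by (simp add: dvd_diff)
    hence zd: "z dvd a * d - b * c" by (simp add: algebra_simps)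
    have sq: "a^2 < z" "d^2 < z" "b^2 < z" "c^2 < z" using A C by (smt (verit) zero_less_power2)+
    have z0: "0 < z" using sq(1) by (smt (verit) zero_le_power2)
    have "a^2 * d^2 < z * z" by (rule mult_strict_mono[OF sq(1) sq(2) z0]) simp
    moreover have "b^2 * c^2 < z * z" by (rule mult_strict_mono[OF sq(3) sq(4) z0]) simp
    ultimately have "(a*d)^2 < z^2" "(b*c)^2 < z^2" by (simp_all add: power_mult_distrib power2_eq_square[of z])
    moreover have "z \<ge> 0" using A by (smt (verit) zero_less_power2)
    ultimately have "a * d < z" "b * c < z" using power_less_imp_less_base by blast+
    moreover have "a * d > 0" "b * c > 0" using A C by simp_all
    ultimately have lt: "\<bar>a * d - b * c\<bar> < z" by simp
    have adbc: "a * d = b * c"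
    proof (rule ccontr)
      assume "a * d \<noteq> b * c" hence "a * d - b * c \<noteq> 0" by simp
      from dvd_imp_le_int[OF this zd] have "\<bar>z\<bar> \<le> \<bar>a * d - b * c\<bar>" .
      with lt z0 show False by simp
    qed
    have "a dvd b * c" using adbc by (metis dvd_triv_left)
    hence "a dvd c" using A(3) by (simp add: coprime_dvd_mult_right_iff)
    moreover have "c dvd d * a" using adbc by (metis dvd_triv_right mult.commute)
    hence "c dvd a" using C(3) by (simp add: coprime_dvd_mult_right_iff)
    ultimately have "a = c" using A C by (simp add: zdvd_antisym_nonneg)
    moreover hence "b = d" using adbc A by (metis mult.commute mult_cancel_left less_irrefl)
    ultimately show "p = p'" using ab cd by simp
  qed
  have "card (PR z) = card (\<psi> ` PR z)" using inj by (simp add: card_image)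
  also have "\<dots> \<le> card (RT z)" by (rule card_mono[OF finite_RT img])
  finally show ?thesis .
qed

lemma PR_SQ: "PR z \<subseteq> SQ z" by (auto simp: PR_def SQ_def)

lemma card_SQ: fixes z :: int assumes z: "z > 0" shows "card (SQ z) \<le> 2 * card (DI z)^2"
proof -
  define G where "G = {g. 0 < g \<and> g^2 dvd z}"
  have GD: "G \<subseteq> DI z" unfolding G_def DI_def by (auto intro: dvd_trans[of _ "_^2"] simp: power2_eq_square)
  have finG: "finite G" using finite_subset[OF GD finite_DI] z by simp
  have sub: "SQ z \<subseteq> (\<Union>g\<in>G. (\<lambda>(a,b). (g*a, g*b)) ` PR (z div g^2))"
  proof
    fix x assume "x \<in> SQ z"
    then obtain a b where x: "x = (a,b)" "0 < a" "0 < b" "a^2 + b^2 = z" by (auto simp: SQ_def)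
    define g where "g = gcd a b"
    have g0: "g > 0" using x by (simp add: g_def)
    define a' where "a' = a div g"
    define b' where "b' = b div g"
    have aa: "a = g * a'" unfolding a'_def g_def by simp
    have bb: "b = g * b'" unfolding b'_def g_def by simp
    have cop: "coprime a' b'" unfolding a'_def b'_def g_def by (rule div_gcd_coprime) (use x in simp)
    have a'0: "a' > 0" using aa x g0 by (simp add: zero_less_mult_iff)
    have b'0: "b' > 0" using bb x g0 by (simp add: zero_less_mult_iff)
    have zz: "z = g^2 * (a'^2 + b'^2)" using x aa bb by (simp add: algebra_simps power_mult_distrib)
    have gG: "g \<in> G" using zz g0 by (simp add: G_def)
    have "z div g^2 = a'^2 + b'^2" using zz g0 by simp
    hence "(a',b') \<in> PR (z div g^2)" using cop a'0 b'0 by (simp add: PR_def)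
    thus "x \<in> (\<Union>g\<in>G. (\<lambda>(a,b). (g*a, g*b)) ` PR (z div g^2))"
      using gG x aa bb by (auto intro!: bexI[of _ g] image_eqI[of _ _ "(a',b')"])
  qed
  have finU: "finite (\<Union>g\<in>G. (\<lambda>(a,b). (g*a, g*b)) ` PR (z div g^2))"
    using finG by (intro finite_UN_I finite_imageI finite_subset[OF PR_SQ finite_SQ])
  have "card (SQ z) \<le> card (\<Union>g\<in>G. (\<lambda>(a,b). (g*a, g*b)) ` PR (z div g^2))"
    by (rule card_mono[OF finU sub])
  also have "\<dots> \<le> (\<Sum>g\<in>G. card ((\<lambda>(a,b). (g*a, g*b)) ` PR (z div g^2)))"
    by (rule card_UN_le[OF finG])
  also have "\<dots> \<le> (\<Sum>g\<in>G. 2 * card (DI z))"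
  proof (rule sum_mono)
    fix g assume g: "g \<in> G"
    have dz: "z div g^2 dvd z" using g by (auto simp: G_def)
    have "card ((\<lambda>(a,b). (g*a, g*b)) ` PR (z div g^2)) \<le> card (PR (z div g^2))" by (rule card_image_le) (rule finite_subset[OF PR_SQ finite_SQ])
    also have "\<dots> \<le> card (RT (z div g^2))" by (rule card_PR)
    also have "\<dots> \<le> 2 * card (DI z)"
    proof (cases "z div g^2 > 0")
      case True
      have "card (RT (z div g^2)) \<le> 2 * card (DI (z div g^2))" by (rule card_RT[OF True])
      also have "\<dots> \<le> 2 * card (DI z)" using DI_mono[OF _ dz] z by simp
      finally show ?thesis .
    next
      case False
      hence "RT (z div g^2) = {}" by (auto simp: RT_def)
      thus ?thesis by simp
    qed
    finally show "card ((\<lambda>(a,b). (g*a, g*b)) ` PR (z div g^2)) \<le> 2 * card (DI z)" .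
  qed
  also have "\<dots> = card G * (2 * card (DI z))" by simp
  also have "\<dots> \<le> card (DI z) * (2 * card (DI z))"
    by (intro mult_right_mono card_mono[OF finite_DI GD]) (use z in simp_all)
  also have "\<dots> = 2 * card (DI z)^2" by (simp add: power2_eq_square)
  finally show ?thesis .
qed

lemma card_TT: fixes z :: int assumes z: "z > 0" shows "card (TT z) \<le> 2 * card (DI z)^3"
proof -
  have finD: "finite (DI z)" using finite_DI z by simp
  have sub: "TT z \<subseteq> (\<Union>m\<in>DI z. SQ m)"
  proof
    fix x assume "x \<in> TT z"
    then obtain a b where x: "x = (a,b)" "0 < a" "0 < b" "(a^2 + b^2) dvd z" by (auto simp: TT_def)
    have "a^2 + b^2 > 0" using x by (smt (verit) zero_less_power2)
    hence "a^2 + b^2 \<in> DI z" using x by (simp add: DI_def)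
    thus "x \<in> (\<Union>m\<in>DI z. SQ m)" using x by (auto simp: SQ_def)
  qed
  have "card (TT z) \<le> card (\<Union>m\<in>DI z. SQ m)"
    by (rule card_mono[OF _ sub]) (use finD finite_SQ in blast)
  also have "\<dots> \<le> (\<Sum>m\<in>DI z. card (SQ m))" by (rule card_UN_le[OF finD])
  also have "\<dots> \<le> (\<Sum>m\<in>DI z. 2 * card (DI z)^2)"
  proof (rule sum_mono)
    fix m assume m: "m \<in> DI z"
    have "card (SQ m) \<le> 2 * card (DI m)^2" using m by (intro card_SQ) (simp add: DI_def)
    also have "\<dots> \<le> 2 * card (DI z)^2" using DI_mono[of z m] m z by (simp add: DI_def power_mono)
    finally show "card (SQ m) \<le> 2 * card (DI z)^2" .
  qed
  also have "\<dots> = 2 * card (DI z)^3" by (simp add: power3_eq_cube power2_eq_square)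
  finally show ?thesis .
qed



lemma f_alt: "f d x = (if odd d then x 1 else 1) *
   (\<Prod>i=1..d div 2. (x (2*i-1+d mod 2))^2 + (x (2*i+d mod 2))^2)"
proof (cases "even d")
  case True thus ?thesis by (simp add: f_def)
next
  case False
  hence m: "d mod 2 = 1" by (simp add: odd_iff_mod_2_eq_one)
  have "(\<Prod>i=1..d div 2. (x (2*i))^2 + (x (2*i+1))^2) =
        (\<Prod>i=1..d div 2. (x (2*i-1+d mod 2))^2 + (x (2*i+d mod 2))^2)"
    by (intro prod.cong) (auto simp: m)
  thus ?thesis using False by (simp add: f_def)
qed

lemma idx_cover: fixes j d :: nat assumes j: "j \<in> {1..d}"
  shows "(odd d \<and> j = 1) \<or> (\<exists>i\<in>{1..d div 2}. j = 2*i-1+d mod 2 \<or> j = 2*i+d mod 2)"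
proof (cases "even d")
  case True
  then obtain m where d: "d = 2*m" by (rule evenE)
  have dd: "d div 2 = m" "d mod 2 = 0" using d by simp_all
  show ?thesis
  proof (cases "even j")
    case True
    then obtain k where k: "j = 2*k" by (rule evenE)
    have "k \<in> {1..d div 2}" using j k dd d by simp
    moreover have "j = 2*k + d mod 2" using k dd by simp
    ultimately show ?thesis by blast
  next
    case False
    then obtain k where k: "j = 2*k+1" by (rule oddE)
    have "k+1 \<in> {1..d div 2}" using j k dd d by simp
    moreover have "j = 2*(k+1)-1 + d mod 2" using k dd by simp
    ultimately show ?thesis by blast
  qed
next
  case False
  then obtain m where d: "d = 2*m+1" by (rule oddE)
  have dd: "d div 2 = m" "d mod 2 = 1" using d by simp_all
  show ?thesis
  proof (cases "even j")
    case True
    then obtain k where k: "j = 2*k" by (rule evenE)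
    have "k \<in> {1..d div 2}" using j k dd d by simp
    moreover have "j = 2*k - 1 + d mod 2" using k dd j by simp
    ultimately show ?thesis by blast
  next
    case False
    then obtain k where k: "j = 2*k+1" by (rule oddE)
    show ?thesis
    proof (cases "k = 0")
      case True thus ?thesis using k d by simp
    next
      case False
      have "k \<in> {1..d div 2}" using j k dd d False by simp
      moreover have "j = 2*k + d mod 2" using k dd by simp
      ultimately show ?thesis by blast
    qed
  qed
qed

lemma idx_range: fixes i d :: nat assumes i: "i \<in> {1..d div 2}"
  shows "2*i-1+d mod 2 \<in> {1..d}" "2*i+d mod 2 \<in> {1..d}"
proof -
  define q where "q = d div 2"
  define r where "r = d mod 2"
  have d: "d = 2*q + r" unfolding q_def r_def by simp
  have m: "r \<le> 1" unfolding r_def by simp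
  have i1: "1 \<le> i" "i \<le> q" using i unfolding q_def by simp_all
  have "1 \<le> 2*i-1+r \<and> 2*i-1+r \<le> d" using d m i1 by arith
  thus "2*i-1+d mod 2 \<in> {1..d}" unfolding r_def by simp
  have "1 \<le> 2*i+r \<and> 2*i+r \<le> d" using d m i1 by arith
  thus "2*i+d mod 2 \<in> {1..d}" unfolding r_def by simp
qed

definition XX :: "nat \<Rightarrow> nat \<Rightarrow> (nat \<Rightarrow> int) set" where
  "XX d P = PiE {1..d} (\<lambda>_. {1..int P})"

definition Phi :: "nat \<Rightarrow> (nat \<Rightarrow> int) \<Rightarrow> int \<times> (nat \<Rightarrow> int \<times> int)" where
  "Phi d x = (if odd d then x 1 else 1, \<lambda>i\<in>{1..d div 2}. (x (2*i-1+d mod 2), x (2*i+d mod 2)))"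

lemma Phi_fst: "odd d \<Longrightarrow> fst (Phi d x) = x 1" unfolding Phi_def by simp
lemma Phi_snd: "i \<in> {1..d div 2} \<Longrightarrow> snd (Phi d x) i = (x (2*i-1+d mod 2), x (2*i+d mod 2))"
  unfolding Phi_def by simp

lemma XX_pos: "x \<in> XX d P \<Longrightarrow> j \<in> {1..d} \<Longrightarrow> 0 < x j \<and> x j \<le> int P"
  by (auto simp: XX_def PiE_def Pi_def)

lemma f_pos: assumes x: "x \<in> XX d P" and d: "d \<ge> 1" shows "f d x > 0"
proof -
  have c: "(if odd d then x 1 else 1) > 0" using XX_pos[OF x, of 1] d by auto
  have "(\<Prod>i=1..d div 2. (x (2*i-1+d mod 2))^2 + (x (2*i+d mod 2))^2) > 0"
  proof (rule prod_pos)
    fix i assume i: "i \<in> {1..d div 2}"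
    have "0 < x (2*i-1+d mod 2)" "0 < x (2*i+d mod 2)" using XX_pos[OF x idx_range(1)[OF i]] XX_pos[OF x idx_range(2)[OF i]] by auto
    thus "0 < (x (2*i-1+d mod 2))^2 + (x (2*i+d mod 2))^2" by (simp add: add_pos_pos)
  qed
  thus ?thesis using c by (simp add: f_alt)
qed

lemma f_le: assumes x: "x \<in> XX d P" and d: "d \<ge> 1" and P: "P \<ge> 1"
  shows "f d x \<le> (2 * int P^2)^d"
proof -
  have P1: "1 \<le> int P" using P by simp
  have PP: "int P \<le> 2 * int P^2" using P1 by (simp add: power2_eq_square)
  have c: "(if odd d then x 1 else 1) \<le> 2 * int P^2" "0 \<le> (if odd d then x 1 else 1)"
    using XX_pos[OF x, of 1] d PP P1 by auto
  have fac: "0 \<le> (x (2*i-1+d mod 2))^2 + (x (2*i+d mod 2))^2 \<and> (x (2*i-1+d mod 2))^2 + (x (2*i+d mod 2))^2 \<le> 2 * int P^2"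
    if i: "i \<in> {1..d div 2}" for i
  proof -
    have "x (2*i-1+d mod 2)^2 \<le> int P^2" "x (2*i+d mod 2)^2 \<le> int P^2"
      using XX_pos[OF x idx_range(1)[OF i]] XX_pos[OF x idx_range(2)[OF i]] by (auto intro: power_mono)
    thus ?thesis by simp
  qed
  have pr: "(\<Prod>i=1..d div 2. (x (2*i-1+d mod 2))^2 + (x (2*i+d mod 2))^2) \<le> (2 * int P^2)^(d div 2)"
    using fac PP P1 by (intro prod_le_power) auto
  have "f d x \<le> (2 * int P^2) * (2 * int P^2)^(d div 2)"
  proof -
    have "0 \<le> (\<Prod>i=1..d div 2. (x (2*i-1+d mod 2))^2 + (x (2*i+d mod 2))^2)"
      using fac by (intro prod_nonneg) blast
    thus ?thesis unfolding f_alt using c pr PP P1 by (intro mult_mono) auto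
  qed
  also have "\<dots> = (2 * int P^2)^(d div 2 + 1)" by simp
  also have "\<dots> \<le> (2 * int P^2)^d"   proof (rule power_increasing)
    define q where "q = d div 2"
    define r where "r = d mod 2"
    have dq: "d = 2*q + r" unfolding q_def r_def by simp
    have "q + 1 \<le> d" using dq d by arith
    thus "d div 2 + 1 \<le> d" unfolding q_def .
    show "1 \<le> 2 * int P^2" using PP P1 by linarith
  qed
  finally show ?thesis .
qed

lemma finite_TT: "z > 0 \<Longrightarrow> finite (TT z)"
proof (rule finite_subset[of _ "{0..z} \<times> {0..z}"])
  assume z: "z > 0"
  show "TT z \<subseteq> {0..z} \<times> {0..z}"
  proof
    fix x assume "x \<in> TT z"
    then obtain a b where x: "x = (a,b)" "0 < a" "0 < b" "(a^2 + b^2) dvd z" by (auto simp: TT_def)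
    have "a^2 + b^2 \<le> z" using x z by (simp add: zdvd_imp_le)
    moreover have "a \<le> a^2" "b \<le> b^2" using le_sq[of a] le_sq[of b] x by auto
    moreover have "0 \<le> a^2" "0 \<le> b^2" by simp_all
    ultimately have "a \<le> z" "b \<le> z" by linarith+
    thus "x \<in> {0..z} \<times> {0..z}" using x by auto
  qed
qed simp

lemma card_fiber: assumes n: "n > 0"
  shows "card {x \<in> XX d P. f d x = n} \<le> card (DI n) * card (TT n) ^ (d div 2)"
proof -
  let ?A = "{x \<in> XX d P. f d x = n}"
  have inj: "inj_on (Phi d) ?A"
  proof (rule inj_onI)
    fix x y assume x: "x \<in> ?A" and y: "y \<in> ?A" and e: "Phi d x = Phi d y"
    have xP: "x \<in> PiE {1..d} (\<lambda>_. {1..int P})" using x by (simp add: XX_def)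
    have yP: "y \<in> PiE {1..d} (\<lambda>_. {1..int P})" using y by (simp add: XX_def)
    have ej: "x j = y j" if j: "j \<in> {1..d}" for j
    proof -
      have cov: "(odd d \<and> j = 1) \<or> (\<exists>i\<in>{1..d div 2}. j = 2*i-1+d mod 2 \<or> j = 2*i+d mod 2)"
        by (rule idx_cover[OF j])
      show ?thesis
      proof (cases "odd d \<and> j = 1")
        case True
        have f1: "fst (Phi d x) = fst (Phi d y)" using e by (rule arg_cong)
        have od: "odd d" using True by (rule conjunct1)
      have f2: "fst (Phi d x) = x 1" "fst (Phi d y) = y 1" by (rule Phi_fst[OF od])+
        have "x 1 = y 1" using f1 f2 by metis
        thus ?thesis using True by simp
      next
        case False
        then obtain i where i: "i \<in> {1..d div 2}" and ji: "j = 2*i-1+d mod 2 \<or> j = 2*i+d mod 2"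
          using cov by blast
        have e1: "snd (Phi d x) i = snd (Phi d y) i" using e by (rule arg_cong)
        have e2: "snd (Phi d x) i = (x (2*i-1+d mod 2), x (2*i+d mod 2))"
          using i by (rule Phi_snd)
        have e3: "snd (Phi d y) i = (y (2*i-1+d mod 2), y (2*i+d mod 2))"
          using i by (rule Phi_snd)
        have pe: "(x (2*i-1+d mod 2), x (2*i+d mod 2)) = (y (2*i-1+d mod 2), y (2*i+d mod 2))"
          using e1 e2 e3 by metis
        have q1: "x (2*i-1+d mod 2) = y (2*i-1+d mod 2)" using pe by (rule Pair_inject) 
        have q2: "x (2*i+d mod 2) = y (2*i+d mod 2)" using pe by (rule Pair_inject)
        from ji show ?thesis
        proof
          assume jj: "j = 2*i-1+d mod 2" show ?thesis unfolding jj by (rule q1)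
        next
          assume jj: "j = 2*i+d mod 2" show ?thesis unfolding jj by (rule q2)
        qed
      qed
    qed
    show "x = y" by (rule PiE_ext[OF xP yP ej])
  qed
  have img: "Phi d ` ?A \<subseteq> DI n \<times> PiE {1..d div 2} (\<lambda>_. TT n)"
  proof
    fix z assume "z \<in> Phi d ` ?A"
    then obtain x where x: "x \<in> XX d P" "f d x = n" and z: "z = Phi d x" by blast
    let ?c = "if odd d then x 1 else 1"
    let ?pr = "\<Prod>i=1..d div 2. (x (2*i-1+d mod 2))^2 + (x (2*i+d mod 2))^2"
    have nf: "n = ?c * ?pr" using x by (simp add: f_alt)
    have "?c > 0" using XX_pos[OF x(1), of 1] odd_pos[of d] by (cases "odd d") auto
    moreover have "?c dvd n" using nf by simp
    ultimately have c: "?c \<in> DI n" by (simp add: DI_def)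
    have "(x (2*i-1+d mod 2), x (2*i+d mod 2)) \<in> TT n" if i: "i \<in> {1..d div 2}" for i
    proof -
      have "(x (2*i-1+d mod 2))^2 + (x (2*i+d mod 2))^2 dvd ?pr" using i by (intro dvd_prodI) auto
      hence "(x (2*i-1+d mod 2))^2 + (x (2*i+d mod 2))^2 dvd n" using nf by simp
      thus ?thesis using XX_pos[OF x(1) idx_range(1)[OF i]] XX_pos[OF x(1) idx_range(2)[OF i]]
        by (simp add: TT_def)
    qed
    thus "z \<in> DI n \<times> PiE {1..d div 2} (\<lambda>_. TT n)" using c z by (auto simp: Phi_def)
  qed
  have fin: "finite (DI n \<times> PiE {1..d div 2} (\<lambda>_. TT n))"
    using finite_DI[of n] finite_TT[OF n] n by (auto intro: finite_PiE)
  have "card ?A = card (Phi d ` ?A)" using inj by (simp add: card_image)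
  also have "\<dots> \<le> card (DI n \<times> PiE {1..d div 2} (\<lambda>_. TT n))" by (rule card_mono[OF fin img])
  also have "\<dots> = card (DI n) * card (TT n) ^ (d div 2)" by (simp add: card_cartesian_product card_PiE)
  finally show ?thesis .
qed

lemma DI_nat: fixes z :: int assumes z: "z > 0" shows "card (DI z) = card {c::nat. c dvd nat z}"
proof -
  have "DI z = int ` {c::nat. c dvd nat z}"
  proof
    show "DI z \<subseteq> int ` {c::nat. c dvd nat z}"
    proof
      fix c assume c: "c \<in> DI z"
      hence "0 < c" "c dvd z" by (auto simp: DI_def)
      hence "nat c dvd nat z" using z by (metis int_dvd_int_iff int_nat_eq less_imp_le)
      thus "c \<in> int ` {c::nat. c dvd nat z}" using \<open>0 < c\<close> by (auto intro!: image_eqI[of _ _ "nat c"])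
    qed
  next
    show "int ` {c::nat. c dvd nat z} \<subseteq> DI z"
    proof
      fix c assume "c \<in> int ` {c::nat. c dvd nat z}"
      then obtain c' where c': "c = int c'" "c' dvd nat z" by blast
      have "nat z \<noteq> 0" using z by simp
      hence "c' \<noteq> 0" using c'(2) by (metis dvd_0_left_iff)
      moreover have "int c' dvd z" using c' z by (metis int_dvd_int_iff int_nat_eq less_imp_le)
      ultimately show "c \<in> DI z" using c' by (simp add: DI_def)
    qed
  qed
  thus ?thesis by (simp add: card_image)
qed



lemma cos_integral: fixes k :: int
  shows "((\<lambda>\<alpha>. cos (2 * pi * \<alpha> * of_int k)) has_integral (if k = 0 then 1 else 0)) {0..1::real}"
proof (cases "k = 0")
  case True
  thus ?thesis using has_integral_const_real[of "1::real" 0 1] by simp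
next
  case False
  define F where "F \<alpha> = sin (2 * pi * \<alpha> * of_int k) / (2 * pi * of_int k)" for \<alpha> :: real
  have der: "(F has_vector_derivative cos (2 * pi * \<alpha> * of_int k)) (at \<alpha> within {0..1})" for \<alpha>
  proof -
    have "(F has_real_derivative cos (2 * pi * \<alpha> * of_int k)) (at \<alpha>)"
      unfolding F_def using False by (auto intro!: derivative_eq_intros)
    thus ?thesis by (simp add: has_real_derivative_iff_has_vector_derivative has_vector_derivative_at_within)
  qed
  have s: "sin (2 * pi * 1 * of_int k) = 0"
    using sin_times_pi_eq_0[of "2 * of_int k"] by (simp add: mult_ac)
  have "((\<lambda>\<alpha>. cos (2 * pi * \<alpha> * of_int k)) has_integral (F 1 - F 0)) {0..1}"
    by (rule fundamental_theorem_of_calculus) (auto intro: der)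
  moreover have "F 1 - F 0 = 0" using s by (simp add: F_def)
  ultimately show ?thesis using False by simp
qed

lemma norm_F1_sq:
  "(cmod (F1 d P \<alpha>))^2 = (\<Sum>x\<in>PiE {1..d} (\<lambda>_. {1..int P}). \<Sum>y\<in>PiE {1..d} (\<lambda>_. {1..int P}). cos (2 * pi * \<alpha> * of_int (f d x - f d y)))"
proof -
  have e: "e t = cis (2 * pi * t)" for t by (simp add: e_def cis_conv_exp mult_ac)
  have Fc: "F1 d P \<alpha> = (\<Sum>x\<in>PiE {1..d} (\<lambda>_. {1..int P}). cis (2 * pi * (\<alpha> * of_int (f d x))))"
    by (simp add: F1_def e)
  have "complex_of_real ((cmod (F1 d P \<alpha>))^2) = F1 d P \<alpha> * cnj (F1 d P \<alpha>)" by (rule complex_norm_square)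
  also have "\<dots> = (\<Sum>x\<in>PiE {1..d} (\<lambda>_. {1..int P}). \<Sum>y\<in>PiE {1..d} (\<lambda>_. {1..int P}). cis (2 * pi * (\<alpha> * of_int (f d x))) * cnj (cis (2 * pi * (\<alpha> * of_int (f d y)))))"
    unfolding Fc by (simp add: cnj_sum sum_product)
  also have "\<dots> = (\<Sum>x\<in>PiE {1..d} (\<lambda>_. {1..int P}). \<Sum>y\<in>PiE {1..d} (\<lambda>_. {1..int P}). cis (2 * pi * \<alpha> * of_int (f d x - f d y)))"
    by (intro sum.cong refl) (simp add: cis_cnj cis_mult algebra_simps)
  finally have "(cmod (F1 d P \<alpha>))^2 = Re (\<Sum>x\<in>PiE {1..d} (\<lambda>_. {1..int P}). \<Sum>y\<in>PiE {1..d} (\<lambda>_. {1..int P}). cis (2 * pi * \<alpha> * of_int (f d x - f d y)))"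
    by (metis Re_complex_of_real)
  thus ?thesis by (simp add: Re_sum)
qed



lemma chain:
  fixes D C N Q p \<delta> \<epsilon> :: real and E d :: nat
  assumes C1: "C \<ge> 1" and D0: "0 \<le> D" and DC: "D \<le> C * N powr \<delta>" and N0: "0 < N"
    and NQ: "N \<le> Q^d" and Q: "Q = 2 * p^2" and p: "p \<ge> 1"
    and dl: "\<delta> = \<epsilon> / (2 * real d * real E)" and E: "E > 0" and d: "d > 0" and e: "\<epsilon> > 0"
  shows "D^E \<le> C^E * (2 powr (\<epsilon>/2) * p powr \<epsilon>)"
proof -
  have dl0: "\<delta> > 0" using dl E d e by simp
  have Q0: "Q > 0" using Q p by simp
  have "D^E \<le> (C * N powr \<delta>)^E" using D0 DC by (intro power_mono) auto
  also have "\<dots> = C^E * N powr (real E * \<delta>)" using N0 by (simp add: power_mult_distrib powr_power)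
  also have "N powr (real E * \<delta>) \<le> (Q^d) powr (real E * \<delta>)"
    using N0 NQ dl0 by (intro powr_mono2) auto
  also have "(Q^d) powr (real E * \<delta>) = Q powr (real d * (real E * \<delta>))"
  proof -
    have "Q^d = Q powr (real d)" using Q0 by (simp add: powr_realpow)
    hence "(Q^d) powr (real E * \<delta>) = (Q powr (real d)) powr (real E * \<delta>)" by simp
    also have "\<dots> = Q powr (real d * (real E * \<delta>))" by (simp add: powr_powr)
    finally show ?thesis .
  qed
  also have "real d * (real E * \<delta>) = \<epsilon> / 2" using dl E d by simp
  also have "Q powr (\<epsilon> / 2) = 2 powr (\<epsilon>/2) * p powr \<epsilon>"
  proof -
    have "Q powr (\<epsilon> / 2) = 2 powr (\<epsilon>/2) * (p^2) powr (\<epsilon>/2)" using Q p by (simp add: powr_mult)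
    also have "(p^2) powr (\<epsilon>/2) = p powr \<epsilon>"
    proof -
      have h1: "p powr 2 = p^2" using p by simp
      have "(p^2) powr (\<epsilon>/2) = (p powr 2) powr (\<epsilon>/2)" using h1 by simp
      also have "\<dots> = p powr \<epsilon>" by (simp add: powr_powr)
      finally show ?thesis .
    qed
    finally show ?thesis .
  qed
  finally show ?thesis using C1 by (simp add: mult_left_mono)
qed

theorem lemma2p1:
  fixes d :: nat and \<epsilon> :: real
  assumes "d \<ge> 1" and "\<epsilon> > 0"
  shows "\<exists>C. \<forall>P::nat. P \<ge> 1 \<longrightarrow>
           integral {0..1} (\<lambda>\<alpha>. (cmod (F1 d P \<alpha>))^2) \<le> C * real P powr (real d + \<epsilon>)"
proof -
  define k where "k = d div 2"
  define E where "E = 3*k + 1"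
  define \<delta> where "\<delta> = \<epsilon> / (2 * real d * real E)"
  have d0: "d > 0" using assms(1) by simp
  have E0: "E > 0" by (simp add: E_def)
  have \<delta>0: "\<delta> > 0" using assms d0 by (simp add: \<delta>_def E_def)
  obtain C where C1: "C \<ge> 1" and C: "\<forall>n::nat. n > 0 \<longrightarrow> real (card {c. c dvd n}) \<le> C * real n powr \<delta>"
    using divisor_bound[OF \<delta>0] by blast
  define K where "K = 2^k * C^E * 2 powr (\<epsilon>/2)"
  have "integral {0..1} (\<lambda>\<alpha>. (cmod (F1 d P \<alpha>))^2) \<le> K * real P powr (real d + \<epsilon>)" if P: "P \<ge> 1" for P :: nat
  proof -
    define X where "X = XX d P"
    have finX: "finite X" by (simp add: X_def XX_def finite_PiE)
    have cardX: "card X = P^d" by (simp add: X_def XX_def card_PiE)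
    have inner: "((\<lambda>\<alpha>. \<Sum>y\<in>X. cos (2 * pi * \<alpha> * of_int (f d x - f d y))) has_integral
        (\<Sum>y\<in>X. if f d x - f d y = 0 then 1 else 0)) {0..1}" for x
      by (rule has_integral_sum[OF finX]) (rule cos_integral)
    have hi0: "((\<lambda>\<alpha>. \<Sum>x\<in>X. \<Sum>y\<in>X. cos (2 * pi * \<alpha> * of_int (f d x - f d y))) has_integral
        (\<Sum>x\<in>X. \<Sum>y\<in>X. if f d x - f d y = 0 then 1 else 0)) {0..1}"
      by (rule has_integral_sum[OF finX]) (rule inner)
    have hi: "((\<lambda>\<alpha>. (cmod (F1 d P \<alpha>))^2) has_integral
        (\<Sum>x\<in>X. \<Sum>y\<in>X. if f d x - f d y = 0 then 1 else 0)) {0..1}"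
      using hi0 by (simp only: norm_F1_sq X_def XX_def)
    have int_eq: "integral {0..1} (\<lambda>\<alpha>. (cmod (F1 d P \<alpha>))^2) = (\<Sum>x\<in>X. \<Sum>y\<in>X. if f d x - f d y = 0 then 1 else 0)"
      using hi by (rule integral_unique)
    have cnt: "(\<Sum>y\<in>X. if f d x - f d y = 0 then 1 else (0::real)) = real (card {y\<in>X. f d y = f d x})" for x
    proof -
      have "(\<Sum>y\<in>X. if f d x - f d y = 0 then 1 else (0::real)) = (\<Sum>y\<in>X. if f d y = f d x then 1 else 0)"
        by (intro sum.cong) auto
      also have "\<dots> = (\<Sum>y\<in>{y\<in>X. f d y = f d x}. 1)"
        using sum.inter_filter[OF finX, of "\<lambda>_. (1::real)" "\<lambda>y. f d y = f d x"] by simp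
      also have "\<dots> = real (card {y\<in>X. f d y = f d x})" by simp
      finally show ?thesis .
    qed
    have bnd: "real (card {y\<in>X. f d y = f d x}) \<le> K * real P powr \<epsilon>" if x: "x \<in> X" for x
    proof -
      define n where "n = f d x"
      have n0: "n > 0" using f_pos[of x d P] x assms(1) by (simp add: n_def X_def)
      have nle: "n \<le> (2 * int P^2)^d" using f_le[of x d P] x assms(1) P by (simp add: n_def X_def)
      define D where "D = card (DI n)"
      have cf: "card {y\<in>X. f d y = n} \<le> D * card (TT n)^k"
        using card_fiber[OF n0, of d P] by (simp add: X_def D_def k_def)
      have tt: "card (TT n) \<le> 2 * D^3" using card_TT[OF n0] by (simp add: D_def)
      have "card (TT n)^k \<le> (2 * D^3)^k" using tt by (rule power_mono) simp
      hence "card {y\<in>X. f d y = n} \<le> D * (2 * D^3)^k" using cf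
        by (meson le_trans mult_le_mono2)
      also have "D * (2 * D^3)^k = 2^k * D^E"
      proof -
        have "(2 * D^3)^k = 2^k * D^(3*k)" by (simp add: power_mult_distrib power_mult)
        thus ?thesis by (simp add: E_def mult_ac)
      qed
      finally have c0: "card {y\<in>X. f d y = n} \<le> 2^k * D^E" .
      have c1: "real (card {y\<in>X. f d y = n}) \<le> 2^k * real D ^ E"
      proof -
        have "real (card {y\<in>X. f d y = n}) \<le> real (2^k * D^E)" using c0 by (simp only: of_nat_le_iff)
        also have "real (2^k * D^E) = 2^k * real D ^ E" by simp
        finally show ?thesis .
      qed
      have nn: "nat n > 0" using n0 by simp
      have rn: "real (nat n) = real_of_int n" using n0 by simp
      have Dle0: "real (card {c. c dvd nat n}) \<le> C * real (nat n) powr \<delta>" using C nn by blast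
      have Dle: "real D \<le> C * real (nat n) powr \<delta>" using Dle0 DI_nat[OF n0] by (simp only: D_def)
      have "real_of_int n \<le> real_of_int ((2 * int P^2)^d)" using nle by (simp only: of_int_le_iff)
      hence NQ: "real (nat n) \<le> (2 * real P^2)^d" using rn by simp
      have ch: "real D ^ E \<le> C^E * (2 powr (\<epsilon>/2) * real P powr \<epsilon>)"
        by (rule chain[OF C1 _ Dle _ NQ refl _ \<delta>_def E0 d0 assms(2)]) (use nn P in simp_all)
      have "real (card {y\<in>X. f d y = n}) \<le> 2^k * (C^E * (2 powr (\<epsilon>/2) * real P powr \<epsilon>))"
        using order_trans[OF c1 mult_left_mono[OF ch]] by simp
      thus ?thesis by (simp add: K_def n_def mult_ac)
    qed
    have "integral {0..1} (\<lambda>\<alpha>. (cmod (F1 d P \<alpha>))^2) = (\<Sum>x\<in>X. real (card {y\<in>X. f d y = f d x}))"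
      using int_eq cnt by simp
    also have "\<dots> \<le> (\<Sum>x\<in>X. K * real P powr \<epsilon>)" by (rule sum_mono) (rule bnd)
    also have "\<dots> = real (P^d) * (K * real P powr \<epsilon>)" using cardX by simp
    also have "\<dots> = K * real P powr (real d + \<epsilon>)"
    proof -
      have "real P powr (real d + \<epsilon>) = real P powr real d * real P powr \<epsilon>" by (simp add: powr_add)
      also have "real P powr real d = real P ^ d" using P by (simp add: powr_realpow)
      finally show ?thesis by simp
    qed
    finally show ?thesis .
  qed
  thus ?thesis by blast
qed

end
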